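(* Let $s\in(0,\infty)$, $r\in\mathbb N$ with $r>s$, $f\in\Lambda_s$, and $\varepsilon,\varepsilon_1\in(0,\infty)$ with $\varepsilon>\varepsilon_1$. Then there exists $\delta\in(0,\infty)$, depending only on $f$, $\varepsilon$, $\varepsilon_1$ (and $s,r,n$), such that for every $j\in\mathbb N$, $$\big[S_{r,j}(s,f,\varepsilon)\big]_\delta\subset S_{r,j-1}(s,f,\varepsilon_1)\cup S_{r,j}(s,f,\varepsilon_1)\cup S_{r,j+1}(s,f,\varepsilon_1).$$
   Context: $\Delta_hf(x):=f(x+h/2)-f(x-h/2)$, $\Delta^{k+1}_h:=\Delta^k_h\Delta_h$, $\Delta_kf(x,y):=\sup_{h\in\mathbb R^n,|h|=y}|\Delta_h^kf(x)|$. $\Lambda_s$: bounded continuous $f$ on $\mathbb R^n$ with $\|f\|_{L^\infty}+\sup_{x\in\mathbb R^n,y\in(0,1]}\Delta_{\lfloor s\rfloor+1}f(x,y)/y^s<\infty$. $S_{r,j}(s,f,\varepsilon):=\{(x,y)\in\mathbb R^n\times(0,\infty):\Delta_rf(x,y)/y^s>\varepsilon,\ y\in(2^{-j-1},2^{-j}]\}$. Hyperbolic metric on $\mathbb R^{n+1}_+=\mathbb R^n\times(0,\infty)$: $\rho(\mathbf x,\mathbf y)=\operatorname{arccosh}(1+\frac{|\mathbf x-\mathbf y|^2}{2x_{n+1}y_{n+1}})$; for $A\subset\mathbb R^{n+1}_+$ and $R>0$, $A_R:=\{\mathbf x\in\mathbb R^{n+1}_+:\inf_{\mathbf y\in A}\rho(\mathbf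 x,\mathbf y)<R\}$. *)

theory Defs
  imports "HOL-Analysis.Analysis"
begin

definition fdiff :: "'a::real_normed_vector \<Rightarrow> ('a \<Rightarrow> real) \<Rightarrow> 'a \<Rightarrow> real" where
  "fdiff h f x = f (x + (1/2) *\<^sub>R h) - f (x - (1/2) *\<^sub>R h)"

fun fdiff_pow :: "nat \<Rightarrow> 'a::real_normed_vector \<Rightarrow> ('a \<Rightarrow> real) \<Rightarrow> 'a \<Rightarrow> real" where
  "fdiff_pow 0 h f = f"
| "fdiff_pow (Suc k) h f = fdiff_pow k h (fdiff h f)"

definition Delta_sup :: "nat \<Rightarrow> ('a::real_normed_vector \<Rightarrow> real) \<Rightarrow> 'a \<Rightarrow> real \<Rightarrow> real" where
  "Delta_sup k f x y = Sup {\<bar>fdiff_pow k h f x\<bar> | h. norm h = y}"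

definition Lambda :: "real \<Rightarrow> ('a::real_normed_vector \<Rightarrow> real) set" where
  "Lambda s = {f. continuous_on UNIV f \<and> bounded (range f) \<and>
     (\<exists>C. \<forall>x y. 0 < y \<and> y \<le> 1 \<longrightarrow>
        Delta_sup (nat \<lfloor>s\<rfloor> + 1) f x y / y powr s \<le> C)}"

definition S_set :: "nat \<Rightarrow> int \<Rightarrow> real \<Rightarrow> ('a::real_normed_vector \<Rightarrow> real) \<Rightarrow> real \<Rightarrow> ('a \<times> real) set" where
  "S_set r j s f \<epsilon> = {(x, y). 0 < y \<and> Delta_sup r f x y / y powr s > \<epsilon> \<and>
       2 powr (- real_of_int j - 1) < y \<and> y \<le> 2 powr (- real_of_int j)}"

definition hyp_dist :: "('a::real_normed_vector \<times> real) \<Rightarrow> ('a \<times> real) \<Rightarrow> real" where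
  "hyp_dist p q = arcosh (1 + ((norm (fst p - fst q))\<^sup>2 + (snd p - snd q)\<^sup>2) / (2 * snd p * snd q))"

definition hyp_nbhd :: "('a::real_normed_vector \<times> real) set \<Rightarrow> real \<Rightarrow> ('a \<times> real) set" where
  "hyp_nbhd A R = {p. 0 < snd p \<and> (\<exists>q\<in>A. hyp_dist p q < R)}"

end

theory Submission
  imports Defs
begin

fun coef :: "nat \<Rightarrow> (real \<times> real) list" where
  "coef 0 = [(1, 0)]"
| "coef (Suc k) = concat (map (\<lambda>(c, d). [(c, d + 1/2), (- c, d - 1/2)]) (coef k))"

lemma sum_list_concat_map:
  "sum_list (map F (concat (map G L))) = sum_list (map (\<lambda>a. sum_list (map F (G a))) L)"
  by (induction L) auto

lemma fdiff_pow_rep: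
  "fdiff_pow k h f x = (\<Sum>p\<leftarrow>coef k. fst p * f (x + snd p *\<^sub>R h))"
proof (induction k arbitrary: f x)
  case 0
  then show ?case by simp
next
  case (Suc k)
  have "fdiff_pow (Suc k) h f x = (\<Sum>p\<leftarrow>coef k. fst p * fdiff h f (x + snd p *\<^sub>R h))"
    using Suc by simp
  also have "\<dots> = (\<Sum>p\<leftarrow>coef (Suc k). fst p * f (x + snd p *\<^sub>R h))"
    unfolding coef.simps sum_list_concat_map
    by (rule arg_cong[where f=sum_list], rule map_cong)
       (auto simp: fdiff_def algebra_simps scaleR_left_distrib)
  finally show ?case .
qed

lemma coef_d: "p \<in> set (coef k) \<Longrightarrow> \<bar>snd p\<bar> \<le> real k / 2"
proof (induction k arbitrary: p)
  case 0 then show ?case by simp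
next
  case (Suc k)
  then obtain q where q: "q \<in> set (coef k)" "snd p = snd q + 1/2 \<or> snd p = snd q - 1/2"
    by (auto split: prod.splits)
  have "\<bar>snd q\<bar> \<le> real k / 2" using Suc.IH q(1) by blast
  then show ?case using q(2) by (simp add: abs_le_iff) linarith
qed

lemma sum_list_2abs: "(\<Sum>p\<leftarrow>L. \<bar>fst p\<bar> + \<bar>fst p\<bar>) = 2 * (\<Sum>p\<leftarrow>(L::(real\<times>real) list). \<bar>fst p\<bar>)"
  by (induction L) auto

lemma coef_abs: "(\<Sum>p\<leftarrow>coef k. \<bar>fst p\<bar>) = 2 ^ k"
proof (induction k)
  case 0 then show ?case by simp
next
  case (Suc k)
  have "(\<Sum>p\<leftarrow>coef (Suc k). \<bar>fst p\<bar>) = (\<Sum>p\<leftarrow>coef k. \<bar>fst p\<bar> + \<bar>fst p\<bar>)"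
    unfolding coef.simps sum_list_concat_map
    by (rule arg_cong[where f=sum_list], rule map_cong) auto
  then show ?case using Suc sum_list_2abs by simp
qed

lemma sum_list_bound:
  fixes L :: "(real \<times> real) list" and F :: "real \<Rightarrow> real"
  assumes "\<And>p. p \<in> set L \<Longrightarrow> \<bar>F (snd p)\<bar> \<le> B"
  shows "\<bar>\<Sum>p\<leftarrow>L. fst p * F (snd p)\<bar> \<le> (\<Sum>p\<leftarrow>L. \<bar>fst p\<bar>) * B"
  using assms
proof (induction L)
  case Nil then show ?case by simp
next
  case (Cons a L)
  have 1: "\<bar>fst a * F (snd a)\<bar> \<le> \<bar>fst a\<bar> * B"
    using Cons.prems[of a] by (simp add: abs_mult mult_left_mono)
  have 2: "\<bar>\<Sum>p\<leftarrow>L. fst p * F (snd p)\<bar> \<le> (\<Sum>p\<leftarrow>L. \<bar>fst p\<bar>) * B"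
    using Cons by auto
  show ?case using 1 2 by (simp add: distrib_right)
qed

lemma fdiff_pow_bound:
  assumes "\<And>t. \<bar>t\<bar> \<le> real k / 2 \<Longrightarrow> \<bar>g (x + t *\<^sub>R h)\<bar> \<le> B"
  shows "\<bar>fdiff_pow k h g x\<bar> \<le> 2 ^ k * B"
  unfolding fdiff_pow_rep
  using sum_list_bound[of "coef k" "\<lambda>d. g (x + d *\<^sub>R h)" B] assms coef_d coef_abs
  by (metis mult.commute prod.collapse)

lemma fdiff_pow_bound_global:
  assumes "\<And>y. \<bar>g y\<bar> \<le> B"
  shows "\<bar>fdiff_pow k h g x\<bar> \<le> 2 ^ k * B"
  using fdiff_pow_bound assms by blast

lemma sum_list_swap:
  fixes F :: "'x \<Rightarrow> 'y \<Rightarrow> real"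
  shows "(\<Sum>p\<leftarrow>A. \<Sum>q\<leftarrow>B. F p q) = (\<Sum>q\<leftarrow>B. \<Sum>p\<leftarrow>A. F p q)"
proof (induction A)
  case Nil then show ?case by (induction B) auto
next
  case (Cons a A)
  then show ?case using sum_list_addf[of "F a" "\<lambda>q. \<Sum>p\<leftarrow>A. F p q" B] by simp
qed

lemma fdiff_pow_comm:
  "fdiff_pow a v (fdiff_pow b h f) x = fdiff_pow b h (fdiff_pow a v f) x"
proof -
  have "fdiff_pow a v (fdiff_pow b h f) x =
     (\<Sum>p\<leftarrow>coef a. \<Sum>q\<leftarrow>coef b. fst p * fst q * f (x + snd p *\<^sub>R v + snd q *\<^sub>R h))"
    unfolding fdiff_pow_rep
    by (simp add: sum_list_const_mult[symmetric] mult.assoc)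
  also have "\<dots> = (\<Sum>q\<leftarrow>coef b. \<Sum>p\<leftarrow>coef a. fst p * fst q * f (x + snd p *\<^sub>R v + snd q *\<^sub>R h))"
    by (rule sum_list_swap)
  also have "\<dots> = fdiff_pow b h (fdiff_pow a v f) x"
    unfolding fdiff_pow_rep
    by (simp add: sum_list_const_mult[symmetric] algebra_simps)
  finally show ?thesis .
qed

lemma fdiff_pow_add: "fdiff_pow (a + b) h f = fdiff_pow b h (fdiff_pow a h f)"
  by (induction a arbitrary: f) auto

lemma fdiff_pow_Suc_outer: "fdiff_pow (Suc k) h f x = fdiff h (fdiff_pow k h f) x"
proof -
  have "fdiff_pow (Suc k) h f x = fdiff_pow 1 h (fdiff_pow k h f) x"
    using fdiff_pow_add[of k 1 h f] by simp
  then show ?thesis by simp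
qed

lemma fdiff_pow_lin:
  "fdiff_pow k h (\<lambda>y. F y + G y) x = fdiff_pow k h F x + fdiff_pow k h G x"
  unfolding fdiff_pow_rep
  using sum_list_addf[of "\<lambda>p. fst p * F (x + snd p *\<^sub>R h)" "\<lambda>p. fst p * G (x + snd p *\<^sub>R h)" "coef k"]
  by (simp add: distrib_left)

lemma fdiff_pow_shift:
  "fdiff_pow k h (\<lambda>y. F (y + a)) x = fdiff_pow k h F (x + a)"
  unfolding fdiff_pow_rep by (simp add: algebra_simps)

lemma fdiff_pow_zero_fun: "fdiff_pow k h (\<lambda>y. 0) x = 0"
  unfolding fdiff_pow_rep by simp

lemma fdiff_pow_zero_step: "fdiff_pow (Suc k) 0 f x = 0"
proof -
  have "fdiff 0 f = (\<lambda>y. 0)" by (auto simp: fdiff_def)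
  then show ?thesis by (simp add: fdiff_pow_zero_fun)
qed

lemma half_half: "(1/2) *\<^sub>R v + (1/2) *\<^sub>R v = (v::'b::real_vector)"
  by (simp flip: scaleR_add_left)


lemma double_step:
  fixes g :: "'b::real_normed_vector \<Rightarrow> real"
  assumes "0 \<le> E" "\<And>y. dist y x \<le> real k * norm v \<Longrightarrow> \<bar>fdiff_pow (Suc k) v g y\<bar> \<le> E"
  shows "\<bar>fdiff_pow k (2 *\<^sub>R v) g x - 2 ^ k * fdiff_pow k v g (x - (real k / 2) *\<^sub>R v)\<bar>
           \<le> real k * 2 ^ k * E / 2"
  using assms
proof (induction k arbitrary: g x E)
  case 0
  then show ?case by simp
next
  case (Suc k)
  define a where "a = fdiff v g"
  define g' where "g' = (\<lambda>y. a (y + (1/2) *\<^sub>R v) + a (y - (1/2) *\<^sub>R v))"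
  have A: "fdiff (2 *\<^sub>R v) g = g'"
  proof
    fix y
    have e1: "y + (1/2) *\<^sub>R v + (1/2) *\<^sub>R v = y + v" using half_half[of v] by (metis add.assoc)
    have e2: "y - (1/2) *\<^sub>R v - (1/2) *\<^sub>R v = y - v" using half_half[of v] by (metis diff_diff_eq)
    show "fdiff (2 *\<^sub>R v) g y = g' y"
      unfolding g'_def a_def fdiff_def using e1 e2 by (simp add: algebra_simps)
  qed
  have B: "fdiff_pow j v g' y = fdiff_pow (Suc j) v g (y + (1/2) *\<^sub>R v) + fdiff_pow (Suc j) v g (y - (1/2) *\<^sub>R v)"
    for j y
  proof -
    have "fdiff_pow j v g' y = fdiff_pow j v (\<lambda>y. a (y + (1/2) *\<^sub>R v)) y + fdiff_pow j v (\<lambda>y. a (y + (- (1/2) *\<^sub>R v))) y"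
      unfolding g'_def by (simp add: fdiff_pow_lin)
    also have "\<dots> = fdiff_pow j v a (y + (1/2) *\<^sub>R v) + fdiff_pow j v a (y + (- (1/2) *\<^sub>R v))"
      by (simp only: fdiff_pow_shift)
    finally show ?thesis by (simp add: a_def)
  qed
  have hyp: "\<bar>fdiff_pow (Suc k) v g' y\<bar> \<le> 2 * E" if "dist y x \<le> real k * norm v" for y
  proof -
    have nv: "norm ((1/2) *\<^sub>R v) = norm v / 2" by simp
    have d1: "dist (y + (1/2) *\<^sub>R v) x \<le> real (Suc k) * norm v"
    proof -
      have "dist (y + (1/2) *\<^sub>R v) x \<le> dist (y + (1/2) *\<^sub>R v) y + dist y x" by (rule dist_triangle)
      moreover have "dist (y + (1/2) *\<^sub>R v) y = norm v / 2" by (simp add: dist_norm)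
      ultimately show ?thesis using that norm_ge_zero[of v] unfolding of_nat_Suc distrib_right by linarith
    qed
    have d2: "dist (y - (1/2) *\<^sub>R v) x \<le> real (Suc k) * norm v"
    proof -
      have "dist (y - (1/2) *\<^sub>R v) x \<le> dist (y - (1/2) *\<^sub>R v) y + dist y x" by (rule dist_triangle)
      moreover have "dist (y - (1/2) *\<^sub>R v) y = norm v / 2" by (simp add: dist_norm)
      ultimately show ?thesis using that norm_ge_zero[of v] unfolding of_nat_Suc distrib_right by linarith
    qed
    show ?thesis unfolding B using Suc.prems(2)[OF d1] Suc.prems(2)[OF d2] by simp
  qed
  have IH: "\<bar>fdiff_pow k (2 *\<^sub>R v) g' x - 2 ^ k * fdiff_pow k v g' (x - (real k / 2) *\<^sub>R v)\<bar>
           \<le> real k * 2 ^ k * (2 * E) / 2"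
    using Suc.IH[of "2 * E" x g'] hyp Suc.prems(1) by simp
  define z where "z = x - (real k / 2) *\<^sub>R v"
  have C1: "fdiff_pow k v g' z = fdiff_pow (Suc k) v g (z + (1/2) *\<^sub>R v) + fdiff_pow (Suc k) v g (z - (1/2) *\<^sub>R v)"
    by (rule B)
  have C2: "fdiff_pow (Suc k) v g (z + (1/2) *\<^sub>R v) - fdiff_pow (Suc k) v g (z - (1/2) *\<^sub>R v)
      = fdiff_pow (Suc (Suc k)) v g z"
    by (simp only: fdiff_pow_Suc_outer[of "Suc k"]) (simp add: fdiff_def)
  have zx: "dist z x \<le> real (Suc k) * norm v"
  proof -
    have "0 \<le> real k * norm v" "0 \<le> norm v" by simp_all
    then show ?thesis by (simp add: z_def dist_norm algebra_simps)
  qed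
  have C3: "\<bar>fdiff_pow (Suc (Suc k)) v g z\<bar> \<le> E" using Suc.prems(2)[OF zx] .
  have zz: "z - (1/2) *\<^sub>R v = x - (real (Suc k) / 2) *\<^sub>R v"
  proof -
    have "(real (Suc k) / 2) *\<^sub>R v = (real k / 2) *\<^sub>R v + (1/2) *\<^sub>R v"
      by (simp add: add_divide_distrib flip: scaleR_add_left)
    then show ?thesis by (simp add: z_def)
  qed
  have main: "fdiff_pow (Suc k) (2 *\<^sub>R v) g x = fdiff_pow k (2 *\<^sub>R v) g' x"
    using A by simp
  have eq: "2 * fdiff_pow (Suc k) v g (z - (1/2) *\<^sub>R v) = fdiff_pow k v g' z - fdiff_pow (Suc (Suc k)) v g z"
    using C1 C2 by linarith
  have eq2: "2 ^ Suc k * fdiff_pow (Suc k) v g (z - (1/2) *\<^sub>R v) = 2 ^ k * fdiff_pow k v g' z - 2 ^ k * fdiff_pow (Suc (Suc k)) v g z"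
  proof -
    have "2 ^ Suc k * fdiff_pow (Suc k) v g (z - (1/2) *\<^sub>R v) = 2 ^ k * (2 * fdiff_pow (Suc k) v g (z - (1/2) *\<^sub>R v))"
      by simp
    also have "\<dots> = 2 ^ k * (fdiff_pow k v g' z - fdiff_pow (Suc (Suc k)) v g z)" by (simp only: eq)
    finally show ?thesis by (simp add: right_diff_distrib)
  qed
  have "\<bar>fdiff_pow (Suc k) (2 *\<^sub>R v) g x - 2 ^ Suc k * fdiff_pow (Suc k) v g (x - (real (Suc k) / 2) *\<^sub>R v)\<bar>
     = \<bar>(fdiff_pow k (2 *\<^sub>R v) g' x - 2 ^ k * fdiff_pow k v g' z) + 2 ^ k * fdiff_pow (Suc (Suc k)) v g z\<bar>"
    unfolding main zz[symmetric] eq2 by simp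
  also have "\<dots> \<le> \<bar>fdiff_pow k (2 *\<^sub>R v) g' x - 2 ^ k * fdiff_pow k v g' z\<bar> + \<bar>2 ^ k * fdiff_pow (Suc (Suc k)) v g z\<bar>"
    by (rule abs_triangle_ineq)
  also have "\<dots> \<le> real k * 2 ^ k * (2 * E) / 2 + 2 ^ k * E"
  proof -
    have "\<bar>2 ^ k * fdiff_pow (Suc (Suc k)) v g z\<bar> \<le> 2 ^ k * E"
      using C3 by (simp add: abs_mult)
    then show ?thesis using IH unfolding z_def by linarith
  qed
  also have "\<dots> = real (Suc k) * 2 ^ Suc k * E / 2"
    by (simp add: algebra_simps)
  finally show ?case .
qed

lemma q_iter:
  fixes g :: "'b::real_normed_vector \<Rightarrow> real"
  assumes j: "1 \<le> j" and E: "0 \<le> E"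
    and hE: "\<And>w y. norm w \<le> \<sigma> \<Longrightarrow> dist y x0 \<le> R \<Longrightarrow> \<bar>fdiff_pow (Suc j) w g y\<bar> \<le> E"
    and hB: "\<And>w y. norm w \<le> \<sigma> \<Longrightarrow> dist y x0 \<le> R \<Longrightarrow> \<bar>fdiff_pow j w g y\<bar> \<le> B"
  shows "2 ^ N * norm v \<le> \<sigma> \<Longrightarrow> dist x x0 + 2 * real j * (2 ^ N - 1) * norm v \<le> R \<Longrightarrow>
         \<bar>fdiff_pow j v g x\<bar> \<le> B / 2 ^ (j * N) + real j * E"
proof (induction N arbitrary: v x)
  case 0
  then have "\<bar>fdiff_pow j v g x\<bar> \<le> B" using hB by simp
  moreover have "0 \<le> real j * E" using E by simp
  ultimately show ?case by simp
next
  case (Suc N)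
  define P :: real where "P = 2 ^ N"
  have P1: "1 \<le> P" unfolding P_def by simp
  have h1: "2 * P * norm v \<le> \<sigma>" using Suc.prems(1) by (simp add: P_def)
  have h2: "dist x x0 + 2 * real j * (2 * P - 1) * norm v \<le> R" using Suc.prems(2) by (simp add: P_def)
  have nv: "0 \<le> norm v" by simp
  have jv: "0 \<le> real j * norm v" by simp
  have nvs: "norm v \<le> \<sigma>"
  proof -
    have "1 * norm v \<le> (2 * P) * norm v" using P1 nv by (intro mult_right_mono) simp_all
    then show ?thesis using h1 by linarith
  qed
  have big: "2 * real j * norm v \<le> 2 * real j * (2 * P - 1) * norm v"
  proof -
    have "1 \<le> 2 * P - 1" using P1 by simp
    then have "(2 * real j * norm v) * 1 \<le> (2 * real j * norm v) * (2 * P - 1)"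
      by (intro mult_left_mono) simp_all
    then show ?thesis by (simp add: algebra_simps)
  qed
  define z where "z = x + (real j / 2) *\<^sub>R v"
  have zx: "dist z x = real j / 2 * norm v" by (simp add: z_def dist_norm)
  have zback: "z - (real j / 2) *\<^sub>R v = x" by (simp add: z_def)
  have ds: "\<bar>fdiff_pow j (2 *\<^sub>R v) g z - 2 ^ j * fdiff_pow j v g x\<bar> \<le> real j * 2 ^ j * E / 2"
  proof -
    have "\<bar>fdiff_pow (Suc j) v g y\<bar> \<le> E" if "dist y z \<le> real j * norm v" for y
    proof (rule hE[OF nvs])
      have "dist y x0 \<le> dist y z + dist z x + dist x x0"
        by (meson dist_triangle add_mono order_trans order_refl)
      then show "dist y x0 \<le> R" using that zx h2 big jv by linarith
    qed
    from double_step[of E z j v g, OF E this] show ?thesis unfolding zback .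
  qed
  have IH: "\<bar>fdiff_pow j (2 *\<^sub>R v) g z\<bar> \<le> B / 2 ^ (j * N) + real j * E"
  proof (rule Suc.IH)
    show "2 ^ N * norm (2 *\<^sub>R v) \<le> \<sigma>" using h1 by (simp add: P_def)
    have "dist z x0 \<le> dist z x + dist x x0" by (rule dist_triangle)
    moreover have "2 * real j * (2 ^ N - 1) * norm (2 *\<^sub>R v) = 2 * real j * (2 * P - 1) * norm v - 2 * real j * norm v"
      by (simp add: P_def algebra_simps)
    ultimately show "dist z x0 + 2 * real j * (2 ^ N - 1) * norm (2 *\<^sub>R v) \<le> R"
      using zx h2 jv by linarith
  qed
  define D where "D = fdiff_pow j v g x"
  define Q :: real where "Q = 2 ^ j"
  have Q2: "2 \<le> Q" unfolding Q_def using j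
    by (metis power_increasing power_one_right numeral_le_iff semiring_norm(69) one_le_numeral)
  have "Q * \<bar>D\<bar> \<le> B / 2 ^ (j * N) + real j * E + real j * Q * E / 2"
  proof -
    have "\<bar>Q * D\<bar> \<le> \<bar>fdiff_pow j (2 *\<^sub>R v) g z\<bar> + \<bar>fdiff_pow j (2 *\<^sub>R v) g z - Q * D\<bar>"
      by (smt (verit))
    moreover have "\<bar>Q * D\<bar> = Q * \<bar>D\<bar>" using Q2 by (simp add: abs_mult)
    ultimately show ?thesis using ds IH unfolding D_def Q_def by (simp add: mult.commute mult.left_commute)
  qed
  then have "\<bar>D\<bar> \<le> (B / 2 ^ (j * N)) / Q + real j * E / Q + real j * E / 2"
    using Q2 by (simp add: field_simps)
  moreover have "real j * E / Q \<le> real j * E / 2"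
    using Q2 E by (intro divide_left_mono) simp_all
  moreover have "(B / 2 ^ (j * N)) / Q = B / 2 ^ (j * Suc N)"
    by (simp add: Q_def power_add)
  ultimately show ?case unfolding D_def by linarith
qed

lemma choose_rho:
  fixes A \<eta> s :: real
  assumes "0 < \<eta>" "0 \<le> A" "0 < s"
  shows "\<exists>\<rho>>0. A * \<rho> powr s \<le> \<eta>"
proof -
  define \<rho> where "\<rho> = (\<eta> / (A + 1)) powr (1 / s)"
  have pos: "0 < \<eta> / (A + 1)" using assms by simp
  have "\<rho> powr s = (\<eta> / (A + 1)) powr ((1 / s) * s)"
    unfolding \<rho>_def by (rule powr_powr)
  also have "(1 / s) * s = 1" using assms(3) by simp
  also have "(\<eta> / (A + 1)) powr 1 = \<eta> / (A + 1)" using assms by simp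
  finally have r1: "\<rho> powr s = \<eta> / (A + 1)" .
  have "A * (\<eta> / (A + 1)) \<le> \<eta>"
  proof -
    have "A * \<eta> \<le> \<eta> * (A + 1)" using assms by (simp add: algebra_simps)
    then show ?thesis using assms by (simp add: pos_divide_le_eq)
  qed
  then have "A * \<rho> powr s \<le> \<eta>" using r1 by simp
  moreover have "0 < \<rho>" unfolding \<rho>_def using assms by simp
  ultimately show ?thesis by blast
qed

lemma choose_N:
  fixes C \<eta> :: real
  assumes "0 < \<eta>" "1 \<le> j"
  shows "\<exists>N. C / 2 ^ (j * N) \<le> \<eta>"
proof (cases "C \<le> 0")
  case True
  then show ?thesis using assms by (intro exI[of _ 0]) simp
next
  case False
  obtain N where N: "C / \<eta> < 2 ^ N" using real_arch_pow[of 2 "C / \<eta>"] by auto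
  have "(2::real) ^ N \<le> 2 ^ (j * N)" using assms(2) by (intro power_increasing) simp_all
  then have "C / 2 ^ (j * N) \<le> C / 2 ^ N" using False by (intro divide_left_mono) simp_all
  also have "\<dots> < \<eta>"
  proof -
    have "C < 2 ^ N * \<eta>" using N assms(1) by (simp add: pos_divide_less_eq)
    then show ?thesis by (simp add: pos_divide_less_eq mult.commute)
  qed
  finally show ?thesis by (intro exI[of _ N]) simp
qed

lemma powr_scale_le:
  fixes a b c s :: real
  assumes "0 < s" "0 \<le> a" "a \<le> b * c" "0 \<le> b" "0 \<le> c"
  shows "a powr s \<le> b powr s * c powr s"
  using powr_mono2[of s a "b * c"] assms by (simp add: powr_mult)

lemma transl_small:
  fixes f :: "'a::real_normed_vector \<Rightarrow> real"
  assumes s: "0 < s" and K: "0 \<le> K" and r: "1 \<le> r"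
    and hK: "\<And>v x. \<bar>fdiff_pow r v f x\<bar> \<le> K * norm v powr s"
  shows "\<forall>j. 1 \<le> j \<longrightarrow> j \<le> r \<longrightarrow> r - j = k \<longrightarrow> (\<forall>\<eta>>0. \<exists>\<rho>>0. \<forall>h v x. norm v \<le> \<rho> * norm h \<longrightarrow>
            \<bar>fdiff_pow j v (fdiff_pow r h f) x\<bar> \<le> \<eta> * norm h powr s)"
proof (induction k)
  case 0
  show ?case
  proof (intro allI impI)
    fix j :: nat and \<eta> :: real
    assume "1 \<le> j" "j \<le> r" "r - j = 0" "0 < \<eta>"
    then have jr: "j = r" by simp
    obtain \<rho> where \<rho>: "\<rho> > 0" "2 ^ r * K * \<rho> powr s \<le> \<eta>"
      using choose_rho[of \<eta> "2 ^ r * K" s] \<open>0 < \<eta>\<close> K s by auto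
    show "\<exists>\<rho>>0. \<forall>h v x. norm v \<le> \<rho> * norm h \<longrightarrow> \<bar>fdiff_pow j v (fdiff_pow r h f) x\<bar> \<le> \<eta> * norm h powr s"
    proof (intro exI[of _ \<rho>] conjI allI impI)
      fix h v x :: 'a
      assume hv: "norm v \<le> \<rho> * norm h"
      have "\<bar>fdiff_pow j v (fdiff_pow r h f) x\<bar> = \<bar>fdiff_pow r h (fdiff_pow r v f) x\<bar>"
        using fdiff_pow_comm[of r v r h f x] jr by simp
      also have "\<dots> \<le> 2 ^ r * (K * norm v powr s)"
        by (rule fdiff_pow_bound_global) (rule hK)
      also have "\<dots> \<le> 2 ^ r * (K * (\<rho> powr s * norm h powr s))"
        using powr_scale_le[of s "norm v" \<rho> "norm h"] s hv \<rho>(1) K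
        by (intro mult_left_mono) simp_all
      also have "\<dots> = (2 ^ r * K * \<rho> powr s) * norm h powr s" by simp
      also have "\<dots> \<le> \<eta> * norm h powr s" using \<rho>(2) by (intro mult_right_mono) simp_all
      finally show "\<bar>fdiff_pow j v (fdiff_pow r h f) x\<bar> \<le> \<eta> * norm h powr s" .
    qed (use \<rho> in simp)
  qed
next
  case (Suc k)
  show ?case
  proof (intro allI impI)
    fix j :: nat and \<eta> :: real
    assume j1: "1 \<le> j" and jr: "j \<le> r" and jk: "r - j = Suc k" and eta: "0 < \<eta>"
    have IH: "\<forall>\<eta>>0. \<exists>\<rho>>0. \<forall>(h::'a) (v::'a) (x::'a). norm v \<le> \<rho> * norm h \<longrightarrow>
            \<bar>fdiff_pow (Suc j) v (fdiff_pow r h f) x\<bar> \<le> \<eta> * norm h powr s"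
    proof -
      have "r - Suc j = k" "Suc j \<le> r" using jk by arith+
      then show ?thesis using Suc.IH[THEN spec[of _ "Suc j"]] by (simp del: fdiff_pow.simps)
    qed
    obtain N where N: "2 ^ j * K / 2 ^ (j * N) \<le> \<eta> / 2"
      using choose_N[of "\<eta> / 2" j "2 ^ j * K"] eta j1 by auto
    obtain \<rho>' where \<rho>': "\<rho>' > 0" "\<And>h v x. norm v \<le> \<rho>' * norm h \<Longrightarrow>
            \<bar>fdiff_pow (Suc j) v (fdiff_pow r h f) x\<bar> \<le> (\<eta> / (2 * real j)) * norm h powr s"
      using IH[rule_format, of "\<eta> / (2 * real j)"] eta j1 by auto
    show "\<exists>\<rho>>0. \<forall>h v x. norm v \<le> \<rho> * norm h \<longrightarrow> \<bar>fdiff_pow j v (fdiff_pow r h f) x\<bar> \<le> \<eta> * norm h powr s"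
    proof (intro exI[of _ "\<rho>' / 2 ^ N"] conjI allI impI)
      show "0 < \<rho>' / 2 ^ N" using \<rho>' by simp
      fix h v x :: 'a
      assume hv: "norm v \<le> \<rho>' / 2 ^ N * norm h"
      define G where "G = fdiff_pow r h f"
      have E0: "0 \<le> (\<eta> / (2 * real j)) * norm h powr s" using eta j1 by simp
      have q: "\<bar>fdiff_pow j v G x\<bar> \<le> (2 ^ j * K * norm h powr s) / 2 ^ (j * N) + real j * ((\<eta> / (2 * real j)) * norm h powr s)"
      proof (rule q_iter[OF j1 E0, where \<sigma> = "\<rho>' * norm h" and x0 = x and R = "2 * real j * (\<rho>' * norm h)"])
        show "\<bar>fdiff_pow (Suc j) w G y\<bar> \<le> \<eta> / (2 * real j) * norm h powr s" if "norm w \<le> \<rho>' * norm h" for w y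
          unfolding G_def using \<rho>'(2) that by blast
        show "\<bar>fdiff_pow j w G y\<bar> \<le> 2 ^ j * K * norm h powr s" for w y
        proof -
          have "\<bar>fdiff_pow j w G y\<bar> \<le> 2 ^ j * (K * norm h powr s)"
            unfolding G_def by (rule fdiff_pow_bound_global) (rule hK)
          then show ?thesis by simp
        qed
        show "2 ^ N * norm v \<le> \<rho>' * norm h" using hv by (simp add: field_simps)
        have "(2 ^ N - 1) * norm v \<le> 2 ^ N * norm v" by (simp add: algebra_simps)
        also have "\<dots> \<le> \<rho>' * norm h" using hv by (simp add: field_simps)
        finally have "2 * real j * ((2 ^ N - 1) * norm v) \<le> 2 * real j * (\<rho>' * norm h)"
          by (intro mult_left_mono) simp_all
        then show "dist x x + 2 * real j * (2 ^ N - 1) * norm v \<le> 2 * real j * (\<rho>' * norm h)"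
          by (simp add: mult.assoc)
      qed
      have a: "(2 ^ j * K * norm h powr s) / 2 ^ (j * N) \<le> \<eta> / 2 * norm h powr s"
      proof -
        have "(2 ^ j * K * norm h powr s) / 2 ^ (j * N) = (2 ^ j * K / 2 ^ (j * N)) * norm h powr s" by simp
        also have "\<dots> \<le> \<eta> / 2 * norm h powr s" using N by (intro mult_right_mono) simp_all
        finally show ?thesis .
      qed
      have b: "real j * ((\<eta> / (2 * real j)) * norm h powr s) = \<eta> / 2 * norm h powr s" using j1 by simp
      show "\<bar>fdiff_pow j v (fdiff_pow r h f) x\<bar> \<le> \<eta> * norm h powr s"
        using q a b unfolding G_def by linarith
    qed
  qed
qed

lemma fdiff_pow_sumlist:
  fixes F :: "'x \<Rightarrow> 'b::real_normed_vector \<Rightarrow> real"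
  shows "fdiff_pow j \<tau> (\<lambda>\<mu>. \<Sum>p\<leftarrow>L. F p \<mu>) lam = (\<Sum>p\<leftarrow>L. fdiff_pow j \<tau> (F p) lam)"
proof -
  have "fdiff_pow j \<tau> (\<lambda>\<mu>. \<Sum>p\<leftarrow>L. F p \<mu>) lam = (\<Sum>q\<leftarrow>coef j. \<Sum>p\<leftarrow>L. fst q * F p (lam + snd q *\<^sub>R \<tau>))"
    unfolding fdiff_pow_rep by (simp add: sum_list_const_mult)
  also have "\<dots> = (\<Sum>p\<leftarrow>L. \<Sum>q\<leftarrow>coef j. fst q * F p (lam + snd q *\<^sub>R \<tau>))"
    by (rule sum_list_swap)
  also have "\<dots> = (\<Sum>p\<leftarrow>L. fdiff_pow j \<tau> (F p) lam)"
    unfolding fdiff_pow_rep ..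
  finally show ?thesis .
qed

lemma fdiff_pow_cmult:
  "fdiff_pow j \<tau> (\<lambda>\<mu>. c * G \<mu>) lam = c * fdiff_pow j \<tau> G lam"
  unfolding fdiff_pow_rep by (simp add: sum_list_const_mult[symmetric] mult.left_commute)

lemma fdiff_pow_affine:
  fixes f :: "'a::real_normed_vector \<Rightarrow> real"
  shows "fdiff_pow j \<tau> (\<lambda>\<mu>::real. f (x + (d * \<mu>) *\<^sub>R h)) lam = fdiff_pow j ((d * \<tau>) *\<^sub>R h) f (x + (d * lam) *\<^sub>R h)"
  unfolding fdiff_pow_rep by (simp add: distrib_left scaleR_add_left add.assoc mult.left_commute)

lemma psi_diff:
  fixes f :: "'a::real_normed_vector \<Rightarrow> real"
  shows "fdiff_pow j \<tau> (\<lambda>\<mu>. fdiff_pow r (\<mu> *\<^sub>R h) f x) lam =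
     (\<Sum>p\<leftarrow>coef r. fst p * fdiff_pow j ((snd p * \<tau>) *\<^sub>R h) f (x + (snd p * lam) *\<^sub>R h))"
proof -
  have "(\<lambda>\<mu>. fdiff_pow r (\<mu> *\<^sub>R h) f x) = (\<lambda>\<mu>. \<Sum>p\<leftarrow>coef r. fst p * f (x + (snd p * \<mu>) *\<^sub>R h))"
    unfolding fdiff_pow_rep by simp
  then show ?thesis
    by (simp add: fdiff_pow_sumlist fdiff_pow_cmult fdiff_pow_affine)
qed

lemma scale_small:
  fixes f :: "'a::real_normed_vector \<Rightarrow> real"
  assumes s: "0 < s" and K: "0 \<le> K" and r: "1 \<le> r"
    and hK: "\<And>v x. \<bar>fdiff_pow r v f x\<bar> \<le> K * norm v powr s"
  shows "\<forall>j. 1 \<le> j \<longrightarrow> j \<le> r \<longrightarrow> r - j = k \<longrightarrow> (\<forall>\<eta>>0. \<exists>\<rho>>0. \<forall>(h::'a) (x::'a) (\<tau>::real) (lam::real).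
            \<bar>\<tau>\<bar> \<le> \<rho> \<longrightarrow> \<bar>lam - 1\<bar> \<le> real j / (4 * real r) \<longrightarrow>
            \<bar>fdiff_pow j \<tau> (\<lambda>\<mu>. fdiff_pow r (\<mu> *\<^sub>R h) f x) lam\<bar> \<le> \<eta> * norm h powr s)"
proof (induction k)
  case 0
  show ?case
  proof (intro allI impI)
    fix j :: nat and \<eta> :: real
    assume "1 \<le> j" "j \<le> r" "r - j = 0" "0 < \<eta>"
    then have jr: "j = r" by simp
    define A where "A = 2 ^ r * K * (real r / 2) powr s"
    have A0: "0 \<le> A" unfolding A_def using K by simp
    obtain \<rho> where \<rho>: "\<rho> > 0" "A * \<rho> powr s \<le> \<eta>"
      using choose_rho[of \<eta> A s] \<open>0 < \<eta>\<close> A0 s by auto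
    show "\<exists>\<rho>>0. \<forall>(h::'a) (x::'a) (\<tau>::real) (lam::real).
            \<bar>\<tau>\<bar> \<le> \<rho> \<longrightarrow> \<bar>lam - 1\<bar> \<le> real j / (4 * real r) \<longrightarrow>
            \<bar>fdiff_pow j \<tau> (\<lambda>\<mu>. fdiff_pow r (\<mu> *\<^sub>R h) f x) lam\<bar> \<le> \<eta> * norm h powr s"
    proof (intro exI[of _ \<rho>] conjI allI impI)
      fix h x :: 'a and \<tau> lam :: real
      assume t: "\<bar>\<tau>\<bar> \<le> \<rho>"
      define B where "B = K * ((real r / 2) powr s * \<rho> powr s * norm h powr s)"
      have Fb: "\<bar>fdiff_pow r ((snd p * \<tau>) *\<^sub>R h) f (x + (snd p * lam) *\<^sub>R h)\<bar> \<le> B"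
        if "p \<in> set (coef r)" for p
      proof -
        have d: "\<bar>snd p\<bar> \<le> real r / 2" using coef_d[OF that] .
        have "norm ((snd p * \<tau>) *\<^sub>R h) = \<bar>snd p\<bar> * \<bar>\<tau>\<bar> * norm h" by (simp add: abs_mult)
        also have "\<dots> \<le> (real r / 2 * \<rho>) * norm h"
          using d t by (intro mult_right_mono mult_mono) simp_all
        finally have "norm ((snd p * \<tau>) *\<^sub>R h) powr s \<le> (real r / 2 * \<rho>) powr s * norm h powr s"
          using powr_scale_le s \<rho>(1) by simp
        also have "\<dots> = (real r / 2) powr s * \<rho> powr s * norm h powr s"
        proof -
          have "(real r / 2 * \<rho>) powr s = (real r / 2) powr s * \<rho> powr s"
            using \<rho>(1) powr_mult[of "real r / 2" \<rho> s] by simp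
          then show ?thesis by simp
        qed
        finally show ?thesis using hK[of "(snd p * \<tau>) *\<^sub>R h" "x + (snd p * lam) *\<^sub>R h"] K
          unfolding B_def by (smt (verit) mult_left_mono)
      qed
      have "\<bar>fdiff_pow j \<tau> (\<lambda>\<mu>. fdiff_pow r (\<mu> *\<^sub>R h) f x) lam\<bar> \<le> (\<Sum>p\<leftarrow>coef r. \<bar>fst p\<bar>) * B"
        unfolding psi_diff jr
        using sum_list_bound[of "coef r" "\<lambda>d. fdiff_pow r ((d * \<tau>) *\<^sub>R h) f (x + (d * lam) *\<^sub>R h)" B] Fb
        by blast
      also have "\<dots> = (A * \<rho> powr s) * norm h powr s" unfolding coef_abs B_def A_def by simp
      also have "\<dots> \<le> \<eta> * norm h powr s" using \<rho>(2) by (intro mult_right_mono) simp_all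
      finally show "\<bar>fdiff_pow j \<tau> (\<lambda>\<mu>. fdiff_pow r (\<mu> *\<^sub>R h) f x) lam\<bar> \<le> \<eta> * norm h powr s" .
    qed (use \<rho> in simp)
  qed
next
  case (Suc k)
  show ?case
  proof (intro allI impI)
    fix j :: nat and \<eta> :: real
    assume j1: "1 \<le> j" and jr: "j \<le> r" and jk: "r - j = Suc k" and eta: "0 < \<eta>"
    have jr': "Suc j \<le> r" using jk by arith
    have IH: "\<forall>\<eta>>0. \<exists>\<rho>>0. \<forall>(h::'a) (x::'a) (\<tau>::real) (lam::real).
            \<bar>\<tau>\<bar> \<le> \<rho> \<longrightarrow> \<bar>lam - 1\<bar> \<le> real (Suc j) / (4 * real r) \<longrightarrow>
            \<bar>fdiff_pow (Suc j) \<tau> (\<lambda>\<mu>. fdiff_pow r (\<mu> *\<^sub>R h) f x) lam\<bar> \<le> \<eta> * norm h powr s"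
    proof -
      have "r - Suc j = k" using jk by arith
      then show ?thesis using Suc.IH[THEN spec[of _ "Suc j"]] jr' by (simp del: fdiff_pow.simps)
    qed
    define B0 where "B0 = 2 ^ j * (K * (real r + 2) powr s)"
    obtain N where N: "B0 / 2 ^ (j * N) \<le> \<eta> / 2"
      using choose_N[of "\<eta> / 2" j B0] eta j1 by auto
    obtain \<rho>' where \<rho>': "\<rho>' > 0" "\<And>(h::'a) (x::'a) \<tau> lam. \<bar>\<tau>\<bar> \<le> \<rho>' \<Longrightarrow> \<bar>lam - 1\<bar> \<le> real (Suc j) / (4 * real r) \<Longrightarrow>
            \<bar>fdiff_pow (Suc j) \<tau> (\<lambda>\<mu>. fdiff_pow r (\<mu> *\<^sub>R h) f x) lam\<bar> \<le> (\<eta> / (2 * real j)) * norm h powr s"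
      using IH[rule_format, of "\<eta> / (2 * real j)"] eta j1 by auto
    define \<sigma> where "\<sigma> = min \<rho>' (min 1 (1 / (8 * real j * real r)))"
    have \<sigma>0: "0 < \<sigma>" unfolding \<sigma>_def using \<rho>' j1 r by simp
    have \<sigma>1: "\<sigma> \<le> \<rho>'" "\<sigma> \<le> 1" "\<sigma> \<le> 1 / (8 * real j * real r)" unfolding \<sigma>_def by simp_all
    have \<sigma>2: "2 * real j * \<sigma> \<le> 1 / (4 * real r)"
    proof -
      have "2 * real j * \<sigma> \<le> 2 * real j * (1 / (8 * real j * real r))"
        using \<sigma>1(3) by (intro mult_left_mono) simp_all
      also have "\<dots> = 1 / (4 * real r)" using j1 by simp
      finally show ?thesis .
    qed
    show "\<exists>\<rho>>0. \<forall>(h::'a) (x::'a) (\<tau>::real) (lam::real).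
            \<bar>\<tau>\<bar> \<le> \<rho> \<longrightarrow> \<bar>lam - 1\<bar> \<le> real j / (4 * real r) \<longrightarrow>
            \<bar>fdiff_pow j \<tau> (\<lambda>\<mu>. fdiff_pow r (\<mu> *\<^sub>R h) f x) lam\<bar> \<le> \<eta> * norm h powr s"
    proof (intro exI[of _ "\<sigma> / 2 ^ N"] conjI allI impI)
      show "0 < \<sigma> / 2 ^ N" using \<sigma>0 by simp
      fix h x :: 'a and \<tau> lam :: real
      assume t: "\<bar>\<tau>\<bar> \<le> \<sigma> / 2 ^ N" and l: "\<bar>lam - 1\<bar> \<le> real j / (4 * real r)"
      define G where "G = (\<lambda>\<mu>. fdiff_pow r (\<mu> *\<^sub>R h) f x)"
      have E0: "0 \<le> (\<eta> / (2 * real j)) * norm h powr s" using eta j1 by simp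
      have q: "\<bar>fdiff_pow j \<tau> G lam\<bar> \<le> (B0 * norm h powr s) / 2 ^ (j * N) + real j * ((\<eta> / (2 * real j)) * norm h powr s)"
      proof -
        have hE: "\<bar>fdiff_pow (Suc j) w G y\<bar> \<le> \<eta> / (2 * real j) * norm h powr s"
          if "norm w \<le> \<sigma>" "dist y 1 \<le> real (Suc j) / (4 * real r)" for w y
          unfolding G_def using \<rho>'(2) that \<sigma>1(1) by (simp add: dist_real_def del: fdiff_pow.simps)
        have hB: "\<bar>fdiff_pow j w G y\<bar> \<le> B0 * norm h powr s"
          if "norm w \<le> \<sigma>" "dist y 1 \<le> real (Suc j) / (4 * real r)" for w y
        proof -
          have y: "\<bar>y - 1\<bar> \<le> 1 / 4"
          proof -
            have "real (Suc j) / (4 * real r) \<le> real r / (4 * real r)"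
              using jr' by (intro divide_right_mono) simp_all
            also have "\<dots> = 1 / 4" using r by simp
            finally have "real (Suc j) / (4 * real r) \<le> 1 / 4" .
            then show ?thesis using that(2) unfolding dist_real_def by linarith
          qed
          have w: "\<bar>w\<bar> \<le> 1" using that(1) \<sigma>1(2) by simp
          have "\<bar>fdiff_pow j w G y\<bar> \<le> 2 ^ j * (K * ((real r + 2) * norm h) powr s)"
          proof (rule fdiff_pow_bound)
            fix t :: real assume tj: "\<bar>t\<bar> \<le> real j / 2"
            have tw: "\<bar>t * w\<bar> \<le> real r / 2"
            proof -
              have "\<bar>t * w\<bar> \<le> (real j / 2) * 1" unfolding abs_mult
                using tj w by (intro mult_mono) simp_all
              then show ?thesis using jr by simp
            qed
            have "\<bar>y + t * w\<bar> \<le> real r + 2" using y tw by linarith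
            then have "norm ((y + t *\<^sub>R w) *\<^sub>R h) \<le> (real r + 2) * norm h"
              by (simp add: mult_right_mono)
            then have "norm ((y + t *\<^sub>R w) *\<^sub>R h) powr s \<le> ((real r + 2) * norm h) powr s"
              using s by (intro powr_mono2) simp_all
            then show "\<bar>G (y + t *\<^sub>R w)\<bar> \<le> K * ((real r + 2) * norm h) powr s"
              unfolding G_def using hK[of "(y + t *\<^sub>R w) *\<^sub>R h" x] K
              by (smt (verit) mult_left_mono)
          qed
          also have "\<dots> = B0 * norm h powr s" unfolding B0_def by (simp add: powr_mult)
          finally show ?thesis .
        qed
        have c1: "2 ^ N * norm \<tau> \<le> \<sigma>" using t by (simp add: field_simps)
        have "(2 ^ N - 1) * \<bar>\<tau>\<bar> \<le> 2 ^ N * \<bar>\<tau>\<bar>" by (simp add: algebra_simps)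
        also have "\<dots> \<le> \<sigma>" using t by (simp add: field_simps)
        finally have "2 * real j * ((2 ^ N - 1) * \<bar>\<tau>\<bar>) \<le> 2 * real j * \<sigma>"
          by (intro mult_left_mono) simp_all
        moreover have "real j / (4 * real r) + 1 / (4 * real r) = real (Suc j) / (4 * real r)"
          by (simp add: add_divide_distrib)
        ultimately have c2: "dist lam 1 + 2 * real j * (2 ^ N - 1) * norm \<tau> \<le> real (Suc j) / (4 * real r)"
          using l \<sigma>2 by (simp add: dist_real_def mult.assoc)
        show ?thesis by (rule q_iter[OF j1 E0 hE hB c1 c2])
      qed
      have a: "(B0 * norm h powr s) / 2 ^ (j * N) \<le> \<eta> / 2 * norm h powr s"
      proof -
        have "(B0 * norm h powr s) / 2 ^ (j * N) = (B0 / 2 ^ (j * N)) * norm h powr s" by simp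
        also have "\<dots> \<le> \<eta> / 2 * norm h powr s" using N by (intro mult_right_mono) simp_all
        finally show ?thesis .
      qed
      have b: "real j * ((\<eta> / (2 * real j)) * norm h powr s) = \<eta> / 2 * norm h powr s" using j1 by simp
      show "\<bar>fdiff_pow j \<tau> (\<lambda>\<mu>. fdiff_pow r (\<mu> *\<^sub>R h) f x) lam\<bar> \<le> \<eta> * norm h powr s"
        using q a b unfolding G_def by linarith
    qed
  qed
qed

lemma rb1: fixes y y0 \<theta> :: real assumes "y>0" "y0>0" "0<\<theta>" "\<theta> \<le> 1/100" "(y-y0)^2 < 2*\<theta>*y*y0"
  shows "y < 2*y0"
proof (rule ccontr)
  assume "\<not> y < 2*y0"
  then have a: "y/2 \<le> y - y0" by simp
  have "(y/2)^2 \<le> (y-y0)^2" using a assms(1) by (intro power_mono) simp_all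
  then have f1: "y^2/4 \<le> (y-y0)^2" by (simp add: power_divide)
  have "2*\<theta>*y*y0 \<le> 2*\<theta>*y*(y/2)" using \<open>\<not> y < 2*y0\<close> assms by (intro mult_left_mono) simp_all
  also have "2*\<theta>*y*(y/2) = \<theta>*y^2" by (simp add: power2_eq_square)
  also have "\<theta>*y^2 \<le> (1/100)*y^2" using assms by (intro mult_right_mono) simp_all
  finally have f2: "2*\<theta>*y*y0 \<le> (1/100)*y^2" .
  have "0 < y^2" using assms by simp
  then show False using f1 f2 assms(5) by linarith
qed

lemma rb2: fixes y y0 \<theta> :: real assumes "y>0" "y0>0" "0<\<theta>" "\<theta> \<le> 1/100" "(y-y0)^2 < 2*\<theta>*y*y0"
  shows "y0 < 2*y"
proof -
  have "(y0-y)^2 < 2*\<theta>*y0*y" using assms(5) by (simp add: power2_commute mult_ac)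
  then show ?thesis using rb1[of y0 y \<theta>] assms by simp
qed

lemma rb3: fixes a y y0 \<theta> \<mu> :: real assumes "y>0" "y0>0" "0 \<le> a" "\<mu> > 0" "\<theta> \<le> \<mu>^2/4" "a^2 < 2*\<theta>*y*y0" "y < 2*y0"
  shows "a < \<mu> * y0"
proof -
  have th: "0 \<le> \<theta>"
  proof (rule ccontr)
    assume "\<not> 0 \<le> \<theta>"
    then have "2*\<theta>*y*y0 \<le> 0" using assms by (simp add: mult_nonpos_nonneg mult_nonneg_nonneg mult_nonpos_nonneg)
    moreover have "0 \<le> a^2" by simp
    ultimately show False using assms(6) by linarith
  qed
  have "2*\<theta>*y*y0 \<le> 2*\<theta>*(2*y0)*y0"
    using assms th by (intro mult_right_mono mult_left_mono) simp_all
  also have "\<dots> = 4*\<theta>*y0^2" by (simp add: power2_eq_square)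
  also have "\<dots> \<le> \<mu>^2 * y0^2" using assms by (intro mult_right_mono) simp_all
  also have "\<dots> = (\<mu>*y0)^2" by (simp add: power_mult_distrib)
  finally have "a^2 < (\<mu>*y0)^2" using assms(6) by linarith
  then show ?thesis using assms by (simp add: power_less_imp_less_base)
qed

lemma Dsup_ge:
  assumes "\<And>z. \<bar>f z\<bar> \<le> M" "norm h = y"
  shows "\<bar>fdiff_pow k h f x\<bar> \<le> Delta_sup k f x y"
  unfolding Delta_sup_def
proof (rule cSup_upper)
  show "\<bar>fdiff_pow k h f x\<bar> \<in> {\<bar>fdiff_pow k h f x\<bar> |h. norm h = y}" using assms(2) by blast
  show "bdd_above {\<bar>fdiff_pow k h f x\<bar> |h. norm h = y}"
    by (rule bdd_aboveI[where M = "2 ^ k * M"]) (auto intro!: fdiff_pow_bound_global assms(1))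
qed

lemma Dsup_obtain:
  fixes f :: "'a::euclidean_space \<Rightarrow> real"
  assumes "\<And>z. \<bar>f z\<bar> \<le> M" "0 \<le> y" "c < Delta_sup k f x y"
  shows "\<exists>h. norm h = y \<and> c < \<bar>fdiff_pow k h f x\<bar>"
proof -
  define b :: 'a where "b = (SOME i. i \<in> Basis)"
  have "norm (y *\<^sub>R b) = y" unfolding b_def using SOME_Basis assms(2) by simp
  then have ne: "{\<bar>fdiff_pow k h f x\<bar> |h. norm h = y} \<noteq> {}" by blast
  have bd: "bdd_above {\<bar>fdiff_pow k h f x\<bar> |h. norm h = y}"
    by (rule bdd_aboveI[where M = "2 ^ k * M"]) (auto intro!: fdiff_pow_bound_global assms(1))
  from assms(3)[unfolded Delta_sup_def] less_cSup_iff[OF ne bd] show ?thesis by blast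
qed

lemma powr_close:
  fixes lam s \<kappa> :: real
  assumes "0 < lam" "0 < s" "0 < \<kappa>" "lam \<le> 1 + ln (1 + \<kappa>) / s"
  shows "lam powr s \<le> 1 + \<kappa>"
proof -
  have "lam powr s = exp (s * ln lam)" using assms(1) by (simp add: powr_def)
  also have "\<dots> \<le> exp (s * (lam - 1))"
    using ln_le_minus_one[OF assms(1)] assms(2) by (simp add: mult_left_mono)
  also have "\<dots> \<le> exp (ln (1 + \<kappa>))"
  proof -
    have "s * (lam - 1) \<le> s * (ln (1 + \<kappa>) / s)" using assms by (intro mult_left_mono) simp_all
    then show ?thesis using assms(2) by simp
  qed
  also have "\<dots> = 1 + \<kappa>" using assms(3) by simp
  finally show ?thesis .
qed

lemma key:
  fixes f :: "'a::euclidean_space \<Rightarrow> real" and s \<epsilon> \<epsilon>1 K M :: real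
  assumes s: "0 < s" and K: "0 \<le> K" and r: "1 \<le> r"
    and hK: "\<And>v x. \<bar>fdiff_pow r v f x\<bar> \<le> K * norm v powr s"
    and hM: "\<And>z. \<bar>f z\<bar> \<le> M"
    and e1: "0 < \<epsilon>1" and e: "\<epsilon>1 < \<epsilon>"
  shows "\<exists>\<delta>>0. \<forall>j::nat.
           hyp_nbhd (S_set r (int j) s f \<epsilon>) \<delta> \<subseteq>
             S_set r (int j - 1) s f \<epsilon>1 \<union> S_set r (int j) s f \<epsilon>1 \<union> S_set r (int j + 1) s f \<epsilon>1"
proof -
  define \<eta> where "\<eta> = (\<epsilon> - \<epsilon>1) / 4"
  have \<eta>: "0 < \<eta>" unfolding \<eta>_def using e by simp
  obtain \<rho>T where \<rho>T: "\<rho>T > 0" "\<And>h v z. norm v \<le> \<rho>T * norm h \<Longrightarrow>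
      \<bar>fdiff_pow 1 v (fdiff_pow r h f) z\<bar> \<le> \<eta> * norm h powr s"
    using transl_small[OF s K r hK, of "r - 1", rule_format, of 1 \<eta>] r \<eta> by auto
  obtain \<rho>S where \<rho>S: "\<rho>S > 0" "\<And>(h::'a) (z::'a) (\<tau>::real) (lam::real). \<bar>\<tau>\<bar> \<le> \<rho>S \<Longrightarrow> \<bar>lam - 1\<bar> \<le> real 1 / (4 * real r) \<Longrightarrow>
      \<bar>fdiff_pow 1 \<tau> (\<lambda>\<mu>. fdiff_pow r (\<mu> *\<^sub>R h) f z) lam\<bar> \<le> \<eta> * norm h powr s"
    using scale_small[OF s K r hK, of "r - 1", rule_format, of 1 \<eta>] r \<eta> by auto
  define \<kappa> where "\<kappa> = (\<epsilon> - \<epsilon>1) / (2 * \<epsilon>1)"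
  have \<kappa>: "0 < \<kappa>" unfolding \<kappa>_def using e e1 by simp
  define \<tau>0 where "\<tau>0 = ln (1 + \<kappa>) / s"
  have \<tau>0: "0 < \<tau>0" unfolding \<tau>0_def using \<kappa> s by simp
  define \<mu> where "\<mu> = min (min \<rho>S \<rho>T) (min \<tau>0 (1 / (2 * real r)))"
  have \<mu>0: "0 < \<mu>" unfolding \<mu>_def using \<rho>S \<rho>T \<tau>0 r by simp
  have \<mu>1: "\<mu> \<le> \<rho>S" "\<mu> \<le> \<rho>T" "\<mu> \<le> \<tau>0" "\<mu> \<le> 1 / (2 * real r)" unfolding \<mu>_def by simp_all
  define \<theta> where "\<theta> = min (1/100) (\<mu>^2/4)"
  have \<theta>0: "0 < \<theta>" unfolding \<theta>_def using \<mu>0 by simp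
  have \<theta>1: "\<theta> \<le> 1/100" "\<theta> \<le> \<mu>^2/4" unfolding \<theta>_def by simp_all
  define \<delta> where "\<delta> = arcosh (1 + \<theta>)"
  have \<delta>0: "0 < \<delta>" unfolding \<delta>_def using \<theta>0 by simp
  show ?thesis
  proof (intro exI[of _ \<delta>] conjI allI subsetI)
    show "0 < \<delta>" by (rule \<delta>0)
    fix j :: nat and p
    assume "p \<in> hyp_nbhd (S_set r (int j) s f \<epsilon>) \<delta>"
    then obtain q where yp: "0 < snd p" and q: "q \<in> S_set r (int j) s f \<epsilon>" and hd: "hyp_dist p q < \<delta>"
      unfolding hyp_nbhd_def by blast
    obtain x y where p: "p = (x, y)" by force
    obtain x0 y0 where qq: "q = (x0, y0)" by force
    have y: "0 < y" using yp p by simp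
    define P where "P = 2 powr (- real j)"
    have P0: "0 < P" unfolding P_def by simp
    have P1: "2 powr (- real j - 1) = P / 2"
      unfolding P_def by (simp add: powr_diff)
    have q0: "0 < y0" "\<epsilon> < Delta_sup r f x0 y0 / y0 powr s" "2 powr (- real j - 1) < y0" "y0 \<le> 2 powr (- real j)"
      using q unfolding qq S_set_def by auto
    have q': "0 < y0" "\<epsilon> < Delta_sup r f x0 y0 / y0 powr s" "P / 2 < y0" "y0 \<le> P"
      using q0 P1 unfolding P_def by simp_all
    define t where "t = ((norm (x - x0))\<^sup>2 + (y - y0)\<^sup>2) / (2 * y * y0)"
    have t0: "0 \<le> t" unfolding t_def using y q'(1) by simp
    have "hyp_dist p q = arcosh (1 + t)" unfolding hyp_dist_def p qq t_def by simp
    then have "arcosh (1 + t) < arcosh (1 + \<theta>)" using hd unfolding \<delta>_def by simp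
    then have "t < \<theta>" using t0 \<theta>0 by simp
    then have tt: "(norm (x - x0))\<^sup>2 + (y - y0)\<^sup>2 < 2 * \<theta> * y * y0"
      unfolding t_def using y q'(1) by (simp add: pos_divide_less_eq mult_ac)
    have ty: "(y - y0)\<^sup>2 < 2 * \<theta> * y * y0" using tt by (smt (verit) zero_le_power2)
    have tu: "(norm (x - x0))\<^sup>2 < 2 * \<theta> * y * y0" using tt by (smt (verit) zero_le_power2)
    have y2: "y < 2 * y0" using rb1[OF y q'(1) \<theta>0 \<theta>1(1) ty] .
    have y3: "y0 < 2 * y" using rb2[OF y q'(1) \<theta>0 \<theta>1(1) ty] .
    have yd: "\<bar>y - y0\<bar> < \<mu> * y0"
      using rb3[of y y0 "\<bar>y - y0\<bar>" \<mu> \<theta>] y q'(1) \<mu>0 \<theta>1(2) ty y2 by simp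
    have ud: "norm (x - x0) < \<mu> * y0"
      using rb3[of y y0 "norm (x - x0)" \<mu> \<theta>] y q'(1) \<mu>0 \<theta>1(2) tu y2 by simp
    define lam where "lam = y / y0"
    define \<tau> where "\<tau> = lam - 1"
    have lam0: "0 < lam" unfolding lam_def using y q'(1) by simp
    have ylam: "y = lam * y0" unfolding lam_def using q'(1) by simp
    have \<tau>\<mu>: "\<bar>\<tau>\<bar> < \<mu>"
    proof -
      have "\<tau> = (y - y0) / y0" unfolding \<tau>_def lam_def using q'(1) by (simp add: field_simps)
      then have "\<bar>\<tau>\<bar> = \<bar>y - y0\<bar> / y0" using q'(1) by (simp add: abs_divide)
      then show ?thesis using yd q'(1) by (simp add: divide_less_eq)
    qed
    have "\<epsilon> * y0 powr s < Delta_sup r f x0 y0" using q'(2) q'(1) by (simp add: pos_less_divide_eq)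
    then obtain h where h: "norm h = y0" "\<epsilon> * y0 powr s < \<bar>fdiff_pow r h f x0\<bar>"
      using Dsup_obtain[OF hM, of y0] q'(1) by force
    define G where "G = fdiff_pow r h f"
    have T: "\<bar>G x - G x0\<bar> \<le> \<eta> * y0 powr s"
    proof -
      have nu: "norm (x - x0) \<le> \<rho>T * norm h" using ud \<mu>1(2) h(1) q'(1)
        by (smt (verit) mult_right_mono)
      have "fdiff_pow 1 (x - x0) G (x0 + (1/2) *\<^sub>R (x - x0)) = G x - G x0"
      proof -
        have "x0 + (1/2) *\<^sub>R (x - x0) + (1/2) *\<^sub>R (x - x0) = x"
          using half_half[of "x - x0"] by (metis add.assoc add.commute diff_add_cancel)
        moreover have "x0 + (1/2) *\<^sub>R (x - x0) - (1/2) *\<^sub>R (x - x0) = x0" by simp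
        ultimately show ?thesis by (simp add: fdiff_def)
      qed
      then show ?thesis using \<rho>T(2)[OF nu, of "x0 + (1/2) *\<^sub>R (x - x0)"] h(1) unfolding G_def by simp
    qed
    have S: "\<bar>fdiff_pow r (lam *\<^sub>R h) f x - G x\<bar> \<le> \<eta> * y0 powr s"
    proof -
      have t1: "\<bar>\<tau>\<bar> \<le> \<rho>S" using \<tau>\<mu> \<mu>1(1) by simp
      have t2: "\<bar>(1 + \<tau> / 2) - 1\<bar> \<le> real 1 / (4 * real r)"
      proof -
        have "\<bar>\<tau>\<bar> \<le> 1 / (2 * real r)" using \<tau>\<mu> \<mu>1(4) by simp
        then show ?thesis by simp
      qed
      have "fdiff_pow 1 \<tau> (\<lambda>\<mu>. fdiff_pow r (\<mu> *\<^sub>R h) f x) (1 + \<tau> / 2)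
            = fdiff_pow r (lam *\<^sub>R h) f x - G x"
        unfolding G_def \<tau>_def by (simp add: fdiff_def)
      then show ?thesis using \<rho>S(2)[OF t1 t2, of h x] h(1) by simp
    qed
    have nh': "norm (lam *\<^sub>R h) = y" using h(1) lam0 ylam by simp
    have low: "(\<epsilon> - 2 * \<eta>) * y0 powr s < \<bar>fdiff_pow r (lam *\<^sub>R h) f x\<bar>"
      using h(2) T S unfolding G_def by (simp add: algebra_simps)
    have lampow: "lam powr s \<le> 1 + \<kappa>"
    proof (rule powr_close[OF lam0 s \<kappa>])
      show "lam \<le> 1 + ln (1 + \<kappa>) / s" using \<tau>\<mu> \<mu>1(3) unfolding \<tau>_def \<tau>0_def by simp
    qed
    have ypow: "y powr s = lam powr s * y0 powr s" unfolding ylam using lam0 q'(1) by (simp add: powr_mult)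
    have "\<epsilon>1 * y powr s \<le> \<epsilon>1 * (1 + \<kappa>) * y0 powr s"
      unfolding ypow using lampow e1 by (simp add: mult_right_mono)
    also have "\<epsilon>1 * (1 + \<kappa>) = \<epsilon> - 2 * \<eta>" unfolding \<kappa>_def \<eta>_def using e1 by (simp add: field_simps)
    finally have "\<epsilon>1 * y powr s < \<bar>fdiff_pow r (lam *\<^sub>R h) f x\<bar>" using low by linarith
    also have "\<dots> \<le> Delta_sup r f x y" by (rule Dsup_ge[OF hM nh'])
    finally have D: "\<epsilon>1 < Delta_sup r f x y / y powr s" using y by (simp add: pos_less_divide_eq)
    have yr: "P / 4 < y" "y < 2 * P" using y2 y3 q'(3) q'(4) by linarith+
    have e_a: "2 powr (- real_of_int (int j - 1) - 1) = P" unfolding P_def by simp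
    have e_b: "2 powr (- real_of_int (int j - 1)) = 2 * P" unfolding P_def
      using powr_add[of 2 1 "- real j"] by simp
    have e_c: "2 powr (- real_of_int (int j) - 1) = P / 2" using P1 by simp
    have e_d: "2 powr (- real_of_int (int j)) = P" unfolding P_def by simp
    have m2: "(2::real) powr (-2) = 1 / 4" by (simp add: powr_minus powr_numeral)
    have m1: "(2::real) powr (-1) = 1 / 2" by (simp add: powr_minus)
    have e_e: "2 powr (- real_of_int (int j + 1) - 1) = P / 4"
    proof -
      have ee: "- real_of_int (int j + 1) - 1 = - real j - 2" by simp
      have "(2::real) powr (- real j - 2) = 2 powr (- real j) * 2 powr (-2)"
        using powr_add[of 2 "- real j" "-2"] by simp
      then show ?thesis unfolding ee P_def m2 by simp
    qed
    have e_f: "2 powr (- real_of_int (int j + 1)) = P / 2"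
    proof -
      have ee: "- real_of_int (int j + 1) = - real j - 1" by simp
      have "(2::real) powr (- real j - 1) = 2 powr (- real j) * 2 powr (-1)"
        using powr_add[of 2 "- real j" "-1"] by simp
      then show ?thesis unfolding ee P_def m1 by simp
    qed
    show "p \<in> S_set r (int j - 1) s f \<epsilon>1 \<union> S_set r (int j) s f \<epsilon>1 \<union> S_set r (int j + 1) s f \<epsilon>1"
      unfolding p S_set_def e_a e_b e_c e_d e_e e_f using D y yr by auto
  qed
qed

theorem mainTheorem4:
  fixes s \<epsilon> \<epsilon>1 :: real and r :: nat and f :: "'a::euclidean_space \<Rightarrow> real"
  assumes "0 < s" and "real r > s" and "f \<in> Lambda s"
    and "0 < \<epsilon>1" and "\<epsilon>1 < \<epsilon>"
  shows "\<exists>\<delta>>0. \<forall>j::nat.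
           hyp_nbhd (S_set r (int j) s f \<epsilon>) \<delta> \<subseteq>
             S_set r (int j - 1) s f \<epsilon>1 \<union> S_set r (int j) s f \<epsilon>1 \<union> S_set r (int j + 1) s f \<epsilon>1"
proof -
  define m where "m = nat \<lfloor>s\<rfloor> + 1"
  have bd: "bounded (range f)" and
    C: "\<exists>C. \<forall>x y. 0 < y \<and> y \<le> 1 \<longrightarrow> Delta_sup (nat \<lfloor>s\<rfloor> + 1) f x y / y powr s \<le> C"
    using assms(3) unfolding Lambda_def by auto
  obtain M where hM: "\<And>z. \<bar>f z\<bar> \<le> M" using bd unfolding bounded_iff by auto
  obtain C where hC0: "\<And>x y. 0 < y \<Longrightarrow> y \<le> 1 \<Longrightarrow> Delta_sup m f x y / y powr s \<le> C"
    using C unfolding m_def by auto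
  have M0: "0 \<le> M" using hM[of 0] by linarith
  have m1: "1 \<le> m" unfolding m_def by simp
  have mr: "m \<le> r"
  proof -
    have "\<lfloor>s\<rfloor> < int r" using assms(2) by linarith
    then show ?thesis unfolding m_def using assms(1) by linarith
  qed
  define K0 where "K0 = max C (2 ^ m * M)"
  have K0: "0 \<le> K0" unfolding K0_def using M0 by (simp add: le_max_iff_disj)
  have hm: "\<bar>fdiff_pow m v f x\<bar> \<le> K0 * norm v powr s" for v x
  proof (cases "v = 0")
    case True
    obtain m' where "m = Suc m'" using m1 by (cases m) auto
    then show ?thesis using True fdiff_pow_zero_step[of m' f x] by simp
  next
    case False
    then have nv: "0 < norm v" by simp
    show ?thesis
    proof (cases "norm v \<le> 1")
      case True
      have "\<bar>fdiff_pow m v f x\<bar> \<le> Delta_sup m f x (norm v)" by (rule Dsup_ge[OF hM]) simp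
      also have "\<dots> \<le> C * norm v powr s" using hC0[OF nv True, of x] nv by (simp add: pos_divide_le_eq)
      also have "\<dots> \<le> K0 * norm v powr s" unfolding K0_def by (intro mult_right_mono) simp_all
      finally show ?thesis .
    next
      case False
      have "\<bar>fdiff_pow m v f x\<bar> \<le> 2 ^ m * M" by (rule fdiff_pow_bound_global) (rule hM)
      also have "\<dots> \<le> 2 ^ m * M * norm v powr s"
      proof -
        have "1 \<le> norm v powr s" using False assms(1) by (intro ge_one_powr_ge_zero) simp_all
        then have "2 ^ m * M * 1 \<le> 2 ^ m * M * norm v powr s" using M0 by (intro mult_left_mono) simp_all
        then show ?thesis by simp
      qed
      also have "\<dots> \<le> K0 * norm v powr s" unfolding K0_def by (intro mult_right_mono) simp_all
      finally show ?thesis .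
    qed
  qed
  have hK: "\<bar>fdiff_pow r v f x\<bar> \<le> (2 ^ (r - m) * K0) * norm v powr s" for v x
  proof -
    have "fdiff_pow r v f = fdiff_pow (r - m) v (fdiff_pow m v f)"
      using fdiff_pow_add[of m "r - m" v f] mr by simp
    then have "\<bar>fdiff_pow r v f x\<bar> \<le> 2 ^ (r - m) * (K0 * norm v powr s)"
      using fdiff_pow_bound_global[of "fdiff_pow m v f" "K0 * norm v powr s" "r - m" v x] hm by simp
    then show ?thesis by simp
  qed
  show ?thesis
    by (rule key[OF assms(1) _ _ hK hM assms(4) assms(5)]) (use K0 m1 mr in simp_all)
qed

end
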